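(* Assume $\mu_1>\mu_a$ for all $a\in\{2,\dots,K\}$ and $c_1,\dots,c_K>0$. Let $(x_2^*,\dots,x_K^* )\in[0,\infty)^{K-1}$ be a maximizer of \[ (x_2,\dots,x_K)\mapsto\frac{\min_{a\neq1}g_a(x_a)}{c_1+c_2x_2+\cdots+c_Kx_K}. \] Then $g_a(x_a^* )=g_b(x_b^* )$ for all $a,b\in\{2,\dots,K\}$.
   Context: Rewards belong to a one-parameter natural exponential family parametrized by the mean; $d(\mu,\mu')$ is the KL divergence between members with means $\mu,\mu'$. For $\alpha\in[0,1]$, $I_\alpha(x,y)=\alpha\,d(x,\alpha x+(1-\alpha)y)+(1-\alpha)\,d(y,\alpha x+(1-\alpha)y)$. For $a\in\{2,\dots,K\}$ and $x\ge0$, $g_a(x)=(1+x)I_{1/(1+x)}(\mu_1,\mu_a)$; $g_a$ is a continuous strictly increasing bijection from $[0,\infty)$ onto $[0,d(\mu_1,\mu_a))$. *)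

theory Defs
  imports "HOL-Analysis.Analysis"
begin

text \<open>A one-parameter natural exponential family: base measure nu on the reals,
  natural parameter space Theta (open interval), cumulant (log-partition) function
  b with b(theta) = ln (integral of exp(theta x) d nu), mean function b' = derivative
  of b, and b'' = derivative of b' (the variance, positive for a nondegenerate family).\<close>

definition nef :: "real measure \<Rightarrow> real set \<Rightarrow> (real \<Rightarrow> real) \<Rightarrow> (real \<Rightarrow> real) \<Rightarrow> (real \<Rightarrow> real) \<Rightarrow> bool" where
  "nef nu \<Theta> b b' b'' \<longleftrightarrow>
     sets nu = sets borel \<and> open \<Theta> \<and> is_interval \<Theta> \<and> \<Theta> \<noteq> {} \<and>
     (\<forall>\<theta>\<in>\<Theta>. integrable nu (\<lambda>x. exp (\<theta> * x)) \<and> b \<theta> = ln (\<integral>x. exp (\<theta> * x) \<partial>nu)) \<and>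
     (\<forall>\<theta>\<in>\<Theta>. (b has_real_derivative b' \<theta>) (at \<theta>)) \<and>
     (\<forall>\<theta>\<in>\<Theta>. (b' has_real_derivative b'' \<theta>) (at \<theta>) \<and> b'' \<theta> > 0)"

definition nat_param :: "real set \<Rightarrow> (real \<Rightarrow> real) \<Rightarrow> real \<Rightarrow> real" where
  "nat_param \<Theta> b' \<mu> = the_inv_into \<Theta> b' \<mu>"

text \<open>KL divergence between the members with means mu and mu' (closed form for an NEF).\<close>
definition kl :: "real set \<Rightarrow> (real \<Rightarrow> real) \<Rightarrow> (real \<Rightarrow> real) \<Rightarrow> real \<Rightarrow> real \<Rightarrow> real" where
  "kl \<Theta> b b' \<mu> \<mu>' =
     (let t = nat_param \<Theta> b' \<mu>; t' = nat_param \<Theta> b' \<mu>' in b t' - b t - \<mu> * (t' - t))"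

definition I_alpha :: "real set \<Rightarrow> (real \<Rightarrow> real) \<Rightarrow> (real \<Rightarrow> real) \<Rightarrow> real \<Rightarrow> real \<Rightarrow> real \<Rightarrow> real" where
  "I_alpha \<Theta> b b' \<alpha> x y =
     \<alpha> * kl \<Theta> b b' x (\<alpha> * x + (1 - \<alpha>) * y) + (1 - \<alpha>) * kl \<Theta> b b' y (\<alpha> * x + (1 - \<alpha>) * y)"

definition g_fun :: "real set \<Rightarrow> (real \<Rightarrow> real) \<Rightarrow> (real \<Rightarrow> real) \<Rightarrow> (nat \<Rightarrow> real) \<Rightarrow> nat \<Rightarrow> real \<Rightarrow> real" where
  "g_fun \<Theta> b b' \<mu> a x = (1 + x) * I_alpha \<Theta> b b' (1 / (1 + x)) (\<mu> 1) (\<mu> a)"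

end

theory Submission
  imports Defs
begin

lemma nef_int:
  assumes "nef nu \<Theta> b b' b''" "s \<in> \<Theta>" "t \<in> \<Theta>" "s \<le> x" "x \<le> t"
  shows "x \<in> \<Theta>"
  using assms unfolding nef_def is_interval_1 by blast

lemma nef_mono:
  assumes N: "nef nu \<Theta> b b' b''" and "s \<in> \<Theta>" "t \<in> \<Theta>" "s < t"
  shows "b' s < b' t"
proof (rule DERIV_pos_imp_increasing[OF \<open>s < t\<close>])
  fix x assume "s \<le> x" "x \<le> t"
  then have "x \<in> \<Theta>" using nef_int[OF N] assms by blast
  then show "\<exists>y. DERIV b' x :> y \<and> y > 0" using N unfolding nef_def by blast
qed

lemma nef_inj:
  assumes N: "nef nu \<Theta> b b' b''"
  shows "inj_on b' \<Theta>"
proof (rule inj_onI)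
  fix x y assume "x \<in> \<Theta>" "y \<in> \<Theta>" "b' x = b' y"
  then show "x = y" using nef_mono[OF N, of x y] nef_mono[OF N, of y x]
    by (metis less_irrefl linorder_neqE_linordered_idom)
qed

lemma nef_np:
  assumes N: "nef nu \<Theta> b b' b''" and "t \<in> \<Theta>"
  shows "nat_param \<Theta> b' (b' t) = t"
  unfolding nat_param_def using the_inv_into_f_f[OF nef_inj[OF N] assms(2)] .

lemma nef_np_cont:
  assumes N: "nef nu \<Theta> b b' b''" and t: "t \<in> \<Theta>"
  shows "isCont (nat_param \<Theta> b') (b' t)"
proof -
  have "open \<Theta>" using N unfolding nef_def by blast
  then obtain e where e: "e > 0" "ball t e \<subseteq> \<Theta>" using t openE by blast
  define d where "d = e/2"
  have d: "d > 0" using e d_def by simp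
  have sub: "\<bar>z - t\<bar> \<le> d \<Longrightarrow> z \<in> \<Theta>" for z
    using e d_def by (intro subsetD[OF e(2)]) (auto simp: dist_real_def)
  show ?thesis
  proof (rule isCont_inverse_function[where f=b' and g="nat_param \<Theta> b'", OF d])
    fix z assume "\<bar>z - t\<bar> \<le> d"
    then have z: "z \<in> \<Theta>" by (rule sub)
    show "nat_param \<Theta> b' (b' z) = z" using nef_np[OF N z] .
    show "isCont b' z" using N z unfolding nef_def using DERIV_isCont by blast
  qed
qed

lemma nef_kl_pos:
  assumes N: "nef nu \<Theta> b b' b''" and t: "t \<in> \<Theta>" and t': "t' \<in> \<Theta>"
  shows "kl \<Theta> b b' (b' t) (b' t') \<ge> 0" and "t \<noteq> t' \<Longrightarrow> kl \<Theta> b b' (b' t) (b' t') > 0"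
proof -
  have kl: "kl \<Theta> b b' (b' t) (b' t') = b t' - b t - b' t * (t' - t)"
    unfolding kl_def Let_def using nef_np[OF N t] nef_np[OF N t'] by simp
  have der: "\<And>x. x \<in> \<Theta> \<Longrightarrow> DERIV b x :> b' x" using N unfolding nef_def by blast
  have pos: "kl \<Theta> b b' (b' t) (b' t') > 0" if "t \<noteq> t'"
  proof (cases "t < t'")
    case True
    obtain z where z: "t < z" "z < t'" "b t' - b t = (t' - t) * b' z"
      using MVT2[OF True, of b b'] der nef_int[OF N t t'] by blast
    have "z \<in> \<Theta>" using nef_int[OF N t t'] z by auto
    then have "b' t < b' z" using nef_mono[OF N t _ z(1)] by blast
    then have "0 < (t' - t) * (b' z - b' t)" using True by simp
    then show ?thesis using kl z True by (simp add: algebra_simps)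
  next
    case False
    then have F: "t' < t" using that by auto
    obtain z where z: "t' < z" "z < t" "b t - b t' = (t - t') * b' z"
      using MVT2[OF F, of b b'] der nef_int[OF N t' t] by blast
    have "z \<in> \<Theta>" using nef_int[OF N t' t] z by auto
    then have "b' z < b' t" using nef_mono[OF N _ t z(2)] by blast
    then have "0 < (t - t') * (b' t - b' z)" using F by simp
    then show ?thesis using kl z F by (simp add: algebra_simps)
  qed
  show "t \<noteq> t' \<Longrightarrow> kl \<Theta> b b' (b' t) (b' t') > 0" by (rule pos)
  show "kl \<Theta> b b' (b' t) (b' t') \<ge> 0"
    using pos kl by (cases "t = t'") (auto intro: less_imp_le)
qed

lemma nef_kl_cont:
  assumes N: "nef nu \<Theta> b b' b''" and t: "t \<in> \<Theta>" and t': "t' \<in> \<Theta>"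
  shows "isCont (\<lambda>u. kl \<Theta> b b' m u) (b' t')"
proof -
  have c1: "isCont (nat_param \<Theta> b') (b' t')" by (rule nef_np_cont[OF N t'])
  have "isCont b t'" using N t' unfolding nef_def using DERIV_isCont by blast
  then have c2: "isCont b (nat_param \<Theta> b' (b' t'))" using nef_np[OF N t'] by simp
  have c3: "isCont (\<lambda>u. b (nat_param \<Theta> b' u)) (b' t')"
    using isCont_o2[OF c1 c2] .
  show ?thesis unfolding kl_def Let_def
    by (intro continuous_intros c1 c3)
qed


lemma g_zero: "g_fun \<Theta> b b' \<mu> a 0 = 0"
  unfolding g_fun_def I_alpha_def kl_def Let_def by simp

lemma arm:
  assumes N: "nef nu \<Theta> b b' b''" and t1: "t1 \<in> \<Theta>" and ta: "ta \<in> \<Theta>"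
    and m1: "\<mu> 1 = b' t1" and ma: "\<mu> a = b' ta" and lt: "\<mu> a < \<mu> 1"
  shows "\<And>x. x > 0 \<Longrightarrow> g_fun \<Theta> b b' \<mu> a x > 0"
    and "\<And>x. x > 0 \<Longrightarrow> isCont (g_fun \<Theta> b b' \<mu> a) x"
proof -
  have tlt: "ta < t1"
    using lt m1 ma nef_mono[OF N t1 ta] by (metis linorder_neqE_linordered_idom less_asym)
  define m where "m x = 1 / (1 + x) * \<mu> 1 + (1 - 1 / (1 + x)) * \<mu> a" for x :: real
  have mrep: "\<exists>s. ta \<le> s \<and> s \<le> t1 \<and> m x = b' s" if "x \<ge> 0" for x
  proof -
    have "m x = \<mu> a + (\<mu> 1 - \<mu> a) / (1 + x)" using that unfolding m_def
      by (simp add: algebra_simps diff_divide_distrib)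
    moreover have "(\<mu> 1 - \<mu> a) / (1 + x) \<le> \<mu> 1 - \<mu> a" using that lt
      by (simp add: divide_le_eq)
    moreover have "(\<mu> 1 - \<mu> a) / (1 + x) \<ge> 0" using that lt by simp
    ultimately have "b' ta \<le> m x" "m x \<le> b' t1" using m1 ma by auto
    moreover have "\<forall>s. ta \<le> s \<and> s \<le> t1 \<longrightarrow> isCont b' s"
      using N nef_int[OF N ta t1] unfolding nef_def using DERIV_isCont by blast
    ultimately show ?thesis using IVT[of b' ta "m x" t1] tlt by auto
  qed
  have gform: "g_fun \<Theta> b b' \<mu> a x = kl \<Theta> b b' (\<mu> 1) (m x) + x * kl \<Theta> b b' (\<mu> a) (m x)"
    if "x \<ge> 0" for x
  proof -
    have "(1 + x) * (1 - 1 / (1 + x)) = x" using that by (simp add: field_simps)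
    then show ?thesis using that unfolding g_fun_def I_alpha_def m_def
      by (simp add: distrib_left mult.assoc[symmetric])
  qed
  show "g_fun \<Theta> b b' \<mu> a x > 0" if xpos: "x > 0" for x
  proof -
    obtain s where s: "ta \<le> s" "s \<le> t1" "m x = b' s" using mrep[of x] xpos by (meson less_imp_le)
    have sT: "s \<in> \<Theta>" using nef_int[OF N ta t1] s by auto
    have "m x < \<mu> 1"
    proof -
      have "m x = \<mu> a + (\<mu> 1 - \<mu> a) / (1 + x)" using that unfolding m_def
        by (simp add: algebra_simps diff_divide_distrib)
      moreover have "(\<mu> 1 - \<mu> a) / (1 + x) < \<mu> 1 - \<mu> a" using that lt
        by (simp add: divide_less_eq)
      ultimately show ?thesis by simp
    qed
    then have "s \<noteq> t1" using s m1 by auto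
    then have "kl \<Theta> b b' (\<mu> 1) (m x) > 0" using nef_kl_pos(2)[OF N t1 sT] s m1 by metis
    moreover have "kl \<Theta> b b' (\<mu> a) (m x) \<ge> 0" using nef_kl_pos(1)[OF N ta sT] s ma by metis
    ultimately show ?thesis using gform[of x] xpos by (simp add: add_pos_nonneg)
  qed
  show "isCont (g_fun \<Theta> b b' \<mu> a) x" if xpos: "x > 0" for x
  proof -
    obtain s where s: "ta \<le> s" "s \<le> t1" "m x = b' s" using mrep[of x] xpos by (meson less_imp_le)
    have sT: "s \<in> \<Theta>" using nef_int[OF N ta t1] s by auto
    have cm: "isCont m x" unfolding m_def using that by (intro continuous_intros) auto
    have k1: "isCont (\<lambda>u. kl \<Theta> b b' (\<mu> 1) u) (m x)"
      using nef_kl_cont[OF N t1 sT] s by simp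
    have ka: "isCont (\<lambda>u. kl \<Theta> b b' (\<mu> a) u) (m x)"
      using nef_kl_cont[OF N t1 sT] s by simp
    have c1: "isCont (\<lambda>y. kl \<Theta> b b' (\<mu> 1) (m y)) x" using isCont_o2[OF cm k1] .
    have c2: "isCont (\<lambda>y. kl \<Theta> b b' (\<mu> a) (m y)) x" using isCont_o2[OF cm ka] .
    have eq: "g_fun \<Theta> b b' \<mu> a = (\<lambda>y. (1 + y) * (1 / (1 + y) * kl \<Theta> b b' (\<mu> 1) (m y)
        + (1 - 1 / (1 + y)) * kl \<Theta> b b' (\<mu> a) (m y)))"
      unfolding g_fun_def I_alpha_def m_def by (rule ext) simp
    show ?thesis unfolding eq using that by (intro continuous_intros c1 c2) auto
  qed
qed


theorem lemma2:
  fixes nu :: "real measure" and \<Theta> :: "real set" and b b' b'' :: "real \<Rightarrow> real"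
    and K :: nat and \<mu> c xs :: "nat \<Rightarrow> real"
  assumes "nef nu \<Theta> b b' b''"
    and "K \<ge> 2"
    and "\<forall>a\<in>{1..K}. \<mu> a \<in> b' ` \<Theta>"
    and "\<forall>a\<in>{2..K}. \<mu> 1 > \<mu> a"
    and "\<forall>a\<in>{1..K}. c a > 0"
    and "\<forall>a\<in>{2..K}. xs a \<ge> 0"
    and "\<forall>y. (\<forall>a\<in>{2..K}. y a \<ge> 0) \<longrightarrow>
           (MIN a\<in>{2..K}. g_fun \<Theta> b b' \<mu> a (y a)) / (c 1 + (\<Sum>a\<in>{2..K}. c a * y a))
           \<le> (MIN a\<in>{2..K}. g_fun \<Theta> b b' \<mu> a (xs a)) / (c 1 + (\<Sum>a\<in>{2..K}. c a * xs a))"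
  shows "\<forall>a\<in>{2..K}. \<forall>a'\<in>{2..K}. g_fun \<Theta> b b' \<mu> a (xs a) = g_fun \<Theta> b b' \<mu> a' (xs a')"
proof -
  note N = assms(1)
  define S where "S = {2..K}"
  define G where "G = g_fun \<Theta> b b' \<mu>"
  have fS: "finite S" and neS: "S \<noteq> {}" using assms(2) unfolding S_def by auto
  obtain t1 where t1: "t1 \<in> \<Theta>" "\<mu> 1 = b' t1" using assms(2,3) by fastforce
  have arm_a: "(\<forall>x>0. G a x > 0) \<and> (\<forall>x>0. isCont (G a) x)" if aS: "a \<in> S" for a
  proof -
    obtain ta where ta: "ta \<in> \<Theta>" "\<mu> a = b' ta" using assms(3) aS unfolding S_def by fastforce
    have lt: "\<mu> a < \<mu> 1" using assms(4) aS unfolding S_def by auto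
    show ?thesis unfolding G_def using arm[OF N t1(1) ta(1) t1(2) ta(2) lt] by blast
  qed
  have cpos: "c a > 0" if "a \<in> S" for a using assms(5) that unfolding S_def by auto
  have c1: "c 1 > 0" using assms(5,2) by auto
  have xsnn: "xs a \<ge> 0" if "a \<in> S" for a using assms(6) that unfolding S_def by auto
  define D where "D y = c 1 + (\<Sum>a\<in>S. c a * y a)" for y :: "nat \<Rightarrow> real"
  define MM where "MM y = (MIN a\<in>S. G a (y a))" for y :: "nat \<Rightarrow> real"
  have Dpos: "D y > 0" if "\<forall>a\<in>S. y a \<ge> 0" for y
  proof -
    have "(\<Sum>a\<in>S. c a * y a) \<ge> 0" using that cpos by (intro sum_nonneg) (simp add: less_imp_le)
    then show ?thesis unfolding D_def using c1 by simp
  qed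
  have opt: "MM y / D y \<le> MM xs / D xs" if "\<forall>a\<in>S. y a \<ge> 0" for y
    using assms(7) that unfolding MM_def D_def S_def G_def by blast
  have MMone: "MM (\<lambda>_. 1) > 0"
    unfolding MM_def using fS neS arm_a by (simp add: Min_gr_iff)
  have "MM (\<lambda>_. 1) / D (\<lambda>_. 1) > 0" using MMone Dpos[of "\<lambda>_. 1"] by simp
  then have "MM xs / D xs > 0" using opt[of "\<lambda>_. 1"] by simp
  then have Mpos: "MM xs > 0" using Dpos[of xs] xsnn by (simp add: zero_less_divide_iff)
  have Mle: "MM xs \<le> G a (xs a)" if "a \<in> S" for a
    unfolding MM_def using fS that by simp
  show ?thesis
  proof (rule ccontr)
    assume "\<not> ?thesis"
    then obtain a a' where aa: "a \<in> S" "a' \<in> S" "G a (xs a) \<noteq> G a' (xs a')"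
      unfolding S_def G_def by blast
    obtain a0 where a0: "a0 \<in> S" "G a0 (xs a0) > MM xs"
      using aa Mle by (metis order_le_neq_trans)
    have xpos: "xs a0 > 0"
    proof (rule ccontr)
      assume "\<not> xs a0 > 0"
      then have "xs a0 = 0" using xsnn[OF a0(1)] by simp
      then show False using a0(2) Mpos g_zero unfolding G_def by simp
    qed
    have "isCont (G a0) (xs a0)" using arm_a[OF a0(1)] xpos by blast
    then have "eventually (\<lambda>x. G a0 x > MM xs) (at (xs a0))"
      unfolding isCont_def using order_tendstoD(1) a0(2) by blast
    then obtain d where d: "d > 0" "\<And>x. x \<noteq> xs a0 \<Longrightarrow> dist x (xs a0) < d \<Longrightarrow> G a0 x > MM xs"
      unfolding eventually_at by blast
    define x' where "x' = max (xs a0 / 2) (xs a0 - d / 2)"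
    have x': "0 < x'" "x' < xs a0" "dist x' (xs a0) < d"
      unfolding x'_def dist_real_def using xpos d(1) by auto
    have Gx': "G a0 x' > MM xs" using d(2)[of x'] x' by simp
    define y where "y = xs(a0 := x')"
    have ynn: "\<forall>a\<in>S. y a \<ge> 0" unfolding y_def using xsnn x' by simp
    have MMy: "MM xs \<le> MM y"
      unfolding MM_def
    proof (subst Min_ge_iff)
      show "finite ((\<lambda>a. G a (y a)) ` S)" using fS by simp
      show "(\<lambda>a. G a (y a)) ` S \<noteq> {}" using neS by simp
      show "\<forall>v\<in>(\<lambda>a. G a (y a)) ` S. (MIN a\<in>S. G a (xs a)) \<le> v"
        using Mle Gx' unfolding y_def MM_def by (auto intro: less_imp_le)
    qed
    have "(\<Sum>a\<in>S. c a * y a) < (\<Sum>a\<in>S. c a * xs a)"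
    proof (rule sum_strict_mono_ex1[OF fS])
      show "\<forall>a\<in>S. c a * y a \<le> c a * xs a" unfolding y_def using x' cpos by simp
      show "\<exists>a\<in>S. c a * y a < c a * xs a" unfolding y_def using x' cpos a0(1) by auto
    qed
    then have Dlt: "D y < D xs" unfolding D_def by simp
    have Dy: "D y > 0" using Dpos ynn by blast
    have "MM xs / D xs < MM xs / D y"
      using Dlt Dy Mpos by (intro divide_strict_left_mono) auto
    also have "\<dots> \<le> MM y / D y" using MMy Dy by (intro divide_right_mono) auto
    finally show False using opt[OF ynn] by simp
  qed
qed

end
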